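(* Let $\sigma_X=(\sigma_X^0,\sigma_X[\cdot,\cdot])$ be a memory-one strategy for player $X$, and let $\alpha,\beta,\gamma\in\mathbb{R}$. Suppose there is a bounded measurable function $\psi:S_X\to\mathbb{R}$ such that for every $x\in S_X$ and $y\in S_Y$, $$\alpha u_X(x,y)+\beta u_Y(x,y)+\gamma=\psi(x)-\lambda\int_{S_X}\psi(s)\,d\sigma_X[x,y](s)-(1-\lambda)\int_{S_X}\psi(s)\,d\sigma_X^0(s).$$ Then for every behavioral strategy $\sigma_Y$ of player $Y$, the expected payoffs satisfy $\alpha\pi_X+\beta\pi_Y+\gamma=0$.
   Context: Standing framework. Let $S_X,S_Y$ be measurable spaces (the action spaces of players $X$ and $Y$), $u_X,u_Y:S_X\times S_Y\to\mathbb{R}$ bounded measurable payoff functions, and $\lambda\in(0,1)$ a discount factor. For $T\ge 0$ let $\mathcal{H}^T=(S_X\times S_Y)^T$ be the set of histories of length $T$ (with $\mathcal{H}^0=\{\varnothing\}$) and $\mathcal{H}=\bigsqcup_{T\ge0}\mathcal{H}^T$. A behavioral strategy for $X$ (resp. $Y$) is a Markov kernel $\sigma_X$ from $\mathcal{H}$ to $S_X$ (resp. $\sigma_Y$ from $\mathcal{H}$ to $S_Y$), assigning to each history a probability measure on the action space. A memory-one strategy for $X$ is a behavioral strategy determined by a probability measure $\sigma_X^0$ on $S_X$ (the initial action, used at the empty history) and a Markov kernel $(x,y)\mapsto\sigma_X[x,y]$ from $S_X\times S_Y$ to $S_X$, with $\sigma_X[h^T]=\sigma_X[x_{T-1},y_{T-1}]$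 for $h^T=((x_0,y_0),\dots,(x_{T-1},y_{T-1}))$, $T\ge1$. Given behavioral strategies $\sigma_X,\sigma_Y$, put $\sigma(h)=\sigma_X[h]\otimes\sigma_Y[h]$ (product measure on $S_X\times S_Y$) and define probability measures $\mu_t$ on $\mathcal{H}^{t+1}$ by $\mu_0=\sigma(\varnothing)$ and $\mu_t(E'\times E)=\int_{E'}\sigma(h)(E)\,d\mu_{t-1}(h)$ for measurable $E'\subseteq\mathcal{H}^t$, $E\subseteq S_X\times S_Y$ (uniquely extended). Let $\nu_t(E)=\mu_t(\mathcal{H}^t\times E)$ be the distribution of the action pair at time $t$. The expected payoffs are $\pi_X=(1-\lambda)\sum_{t=0}^\infty\lambda^t\int_{S_X\times S_Y}u_X\,d\nu_t$ and $\pi_Y=(1-\lambda)\sum_{t=0}^\infty\lambda^t\int_{S_X\times S_Y}u_Y\,d\nu_t$. *)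

theory Defs
  imports "HOL-Probability.Probability"
begin

text \<open>Histories of length T are represented as functions h :: nat => 'x * 'y
  on the index set {..<T} (extensional, i.e. elements of PiM), so the space of
  histories of length T is the product measurable space (S_X x S_Y)^T.
  A behavioral strategy is a family, indexed by the length T, of Markov kernels
  from histories of length T to the action space (measurability on the disjoint
  union H is measurability on every piece H^T).\<close>

definition hist_space :: "'x measure \<Rightarrow> 'y measure \<Rightarrow> nat \<Rightarrow> (nat \<Rightarrow> 'x \<times> 'y) measure" where
  "hist_space SX SY T = PiM {..<T} (\<lambda>_. SX \<Otimes>\<^sub>M SY)"

definition behavioral :: "'x measure \<Rightarrow> 'y measure \<Rightarrow> 'a measure
    \<Rightarrow> (nat \<Rightarrow> (nat \<Rightarrow> 'x \<times> 'y) \<Rightarrow> 'a measure) \<Rightarrow> bool" where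
  "behavioral SX SY SA \<sigma> \<longleftrightarrow> (\<forall>T. \<sigma> T \<in> measurable (hist_space SX SY T) (prob_algebra SA))"

definition memory_one :: "'x measure \<Rightarrow> ('x \<Rightarrow> 'y \<Rightarrow> 'x measure)
    \<Rightarrow> nat \<Rightarrow> (nat \<Rightarrow> 'x \<times> 'y) \<Rightarrow> 'x measure" where
  "memory_one \<sigma>0 K T h = (if T = 0 then \<sigma>0 else K (fst (h (T - 1))) (snd (h (T - 1))))"

text \<open>hist_dist T is the distribution of the history of length T;
  the paper's mu_t is hist_dist (Suc t). The recursion
  mu_t(E' x E) = int_{E'} sigma(h)(E) d mu_{t-1}(h) is expressed by the Giry-monad bind.\<close>
fun hist_dist :: "'x measure \<Rightarrow> 'y measure
    \<Rightarrow> (nat \<Rightarrow> (nat \<Rightarrow> 'x \<times> 'y) \<Rightarrow> 'x measure)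
    \<Rightarrow> (nat \<Rightarrow> (nat \<Rightarrow> 'x \<times> 'y) \<Rightarrow> 'y measure)
    \<Rightarrow> nat \<Rightarrow> (nat \<Rightarrow> 'x \<times> 'y) measure" where
  "hist_dist SX SY \<sigma>X \<sigma>Y 0 = return (hist_space SX SY 0) (\<lambda>_. undefined)"
| "hist_dist SX SY \<sigma>X \<sigma>Y (Suc t) =
     bind (hist_dist SX SY \<sigma>X \<sigma>Y t)
       (\<lambda>h. distr (\<sigma>X t h \<Otimes>\<^sub>M \<sigma>Y t h) (hist_space SX SY (Suc t)) (\<lambda>a. h(t := a)))"

definition act_dist :: "'x measure \<Rightarrow> 'y measure
    \<Rightarrow> (nat \<Rightarrow> (nat \<Rightarrow> 'x \<times> 'y) \<Rightarrow> 'x measure)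
    \<Rightarrow> (nat \<Rightarrow> (nat \<Rightarrow> 'x \<times> 'y) \<Rightarrow> 'y measure)
    \<Rightarrow> nat \<Rightarrow> ('x \<times> 'y) measure" where
  "act_dist SX SY \<sigma>X \<sigma>Y t = distr (hist_dist SX SY \<sigma>X \<sigma>Y (Suc t)) (SX \<Otimes>\<^sub>M SY) (\<lambda>h. h t)"

definition payoff :: "'x measure \<Rightarrow> 'y measure
    \<Rightarrow> (nat \<Rightarrow> (nat \<Rightarrow> 'x \<times> 'y) \<Rightarrow> 'x measure)
    \<Rightarrow> (nat \<Rightarrow> (nat \<Rightarrow> 'x \<times> 'y) \<Rightarrow> 'y measure)
    \<Rightarrow> real \<Rightarrow> ('x \<times> 'y \<Rightarrow> real) \<Rightarrow> real" where
  "payoff SX SY \<sigma>X \<sigma>Y d u =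
     (1 - d) * (\<Sum>t. d ^ t * (\<integral>z. u z \<partial>act_dist SX SY \<sigma>X \<sigma>Y t))"

end

theory Submission imports Defs begin

lemma series_lemma:
  fixes ux uy a :: "nat \<Rightarrow> real" and d \<alpha> \<beta> \<gamma> BX BY A :: real
  assumes d: "0 < d" "d < 1"
    and bx: "\<And>t. \<bar>ux t\<bar> \<le> BX" and hy: "\<And>t. \<bar>uy t\<bar> \<le> BY" and ba: "\<And>t. \<bar>a t\<bar> \<le> A"
    and e: "\<And>t. \<alpha> * ux t + \<beta> * uy t + \<gamma> = a t - d * a (Suc t) - (1 - d) * a 0"
  shows "\<alpha> * ((1 - d) * (\<Sum>t. d ^ t * ux t)) + \<beta> * ((1 - d) * (\<Sum>t. d ^ t * uy t)) + \<gamma> = 0"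
proof -
  have g: "summable (\<lambda>t. d ^ t)" using d by (intro summable_geometric) auto
  have sx: "summable (\<lambda>t. d ^ t * ux t)"
    by (rule summable_comparison_test[OF _ summable_mult2[OF g, of BX]])
       (use d bx in \<open>auto simp: abs_mult intro!: mult_left_mono\<close>)
  have sy: "summable (\<lambda>t. d ^ t * uy t)"
    by (rule summable_comparison_test[OF _ summable_mult2[OF g, of BY]])
       (use d hy in \<open>auto simp: abs_mult intro!: mult_left_mono\<close>)
  have gs: "(\<lambda>t. d ^ t) sums (1 / (1 - d))" using d geometric_sums[of d] by auto
  have s1: "(\<lambda>t. \<alpha> * (d ^ t * ux t) + \<beta> * (d ^ t * uy t) + \<gamma> * d ^ t) sums
     (\<alpha> * (\<Sum>t. d ^ t * ux t) + \<beta> * (\<Sum>t. d ^ t * uy t) + \<gamma> * (1 / (1 - d)))"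
    by (intro sums_add sums_mult summable_sums sx sy gs)
  have lim: "(\<lambda>t. d ^ t * a t) \<longlonglongrightarrow> 0"
  proof (rule Lim_null_comparison[where g="\<lambda>t. A * d ^ t"])
    show "\<forall>\<^sub>F t in sequentially. norm (d ^ t * a t) \<le> A * d ^ t"
      using d ba by (auto simp: abs_mult mult.commute intro!: mult_right_mono always_eventually)
    show "(\<lambda>t. A * d ^ t) \<longlonglongrightarrow> 0"
      using d by (intro tendsto_mult_right_zero LIMSEQ_power_zero) auto
  qed
  have tel: "(\<lambda>t. d ^ t * a t - d ^ Suc t * a (Suc t)) sums (d ^ 0 * a 0 - 0)"
    using telescope_sums'[OF lim] by simp
  have s2: "(\<lambda>t. (d ^ t * a t - d ^ Suc t * a (Suc t)) - (1 - d) * a 0 * d ^ t) sums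
     (a 0 - (1 - d) * a 0 * (1 / (1 - d)))"
    using sums_diff[OF tel sums_mult[OF gs, of "(1 - d) * a 0"]] by simp
  have eqf: "(\<lambda>t. \<alpha> * (d ^ t * ux t) + \<beta> * (d ^ t * uy t) + \<gamma> * d ^ t) =
     (\<lambda>t. (d ^ t * a t - d ^ Suc t * a (Suc t)) - (1 - d) * a 0 * d ^ t)"
  proof
    fix t
    have "\<alpha> * (d ^ t * ux t) + \<beta> * (d ^ t * uy t) + \<gamma> * d ^ t = d ^ t * (\<alpha> * ux t + \<beta> * uy t + \<gamma>)"
      by (simp add: algebra_simps)
    also have "\<dots> = d ^ t * (a t - d * a (Suc t) - (1 - d) * a 0)" by (simp add: e)
    finally show "\<alpha> * (d ^ t * ux t) + \<beta> * (d ^ t * uy t) + \<gamma> * d ^ t =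
      (d ^ t * a t - d ^ Suc t * a (Suc t)) - (1 - d) * a 0 * d ^ t"
      by (simp add: algebra_simps)
  qed
  have "\<alpha> * (\<Sum>t. d ^ t * ux t) + \<beta> * (\<Sum>t. d ^ t * uy t) + \<gamma> * (1 / (1 - d)) = 0"
    using sums_unique2[OF s1[unfolded eqf] s2] d by simp
  then have "(1 - d) * (\<alpha> * (\<Sum>t. d ^ t * ux t) + \<beta> * (\<Sum>t. d ^ t * uy t) + \<gamma> * (1 / (1 - d))) = 0"
    by simp
  moreover have "(1 - d) * (\<gamma> * (1 / (1 - d))) = \<gamma>" using d by simp
  ultimately show ?thesis by (simp add: distrib_left mult.assoc[symmetric])
       (simp add: algebra_simps)
qed

lemma int_bound:
  fixes f :: "'a \<Rightarrow> real"
  assumes M: "M \<in> space (prob_algebra N)" and f: "f \<in> borel_measurable N"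
    and b: "\<And>z. z \<in> space N \<Longrightarrow> \<bar>f z\<bar> \<le> B"
  shows "\<bar>\<integral>z. f z \<partial>M\<bar> \<le> B" and "integrable M f"
proof -
  have ps: "prob_space M" and se: "sets M = sets N" using M by (auto simp: space_prob_algebra)
  have sp: "space M = space N" using se by (rule sets_eq_imp_space_eq)
  interpret prob_space M by (rule ps)
  have fm: "f \<in> borel_measurable M" using f se by (simp cong: measurable_cong_sets)
  show int: "integrable M f"
    by (rule integrable_const_bound[where B=B]) (use b sp fm in auto)
  have "(\<integral>z. f z \<partial>M) \<le> B"
    by (rule integral_le_const[OF int]) (use b sp in \<open>auto intro!: AE_I2 simp: abs_le_iff\<close>)
  moreover have "-B \<le> (\<integral>z. f z \<partial>M)"
  proof (rule integral_ge_const[OF int], rule AE_I2)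
    fix z assume "z \<in> space M"
    then have "\<bar>f z\<bar> \<le> B" using b sp by auto
    then show "-B \<le> f z" by linarith
  qed
  ultimately show "\<bar>\<integral>z. f z \<partial>M\<bar> \<le> B" by auto
qed

context
  fixes SX :: "'x measure" and SY :: "'y measure" and \<sigma>0 :: "'x measure"
    and K :: "'x \<Rightarrow> 'y \<Rightarrow> 'x measure"
    and \<sigma>Y :: "nat \<Rightarrow> (nat \<Rightarrow> 'x \<times> 'y) \<Rightarrow> 'y measure"
  assumes \<sigma>0: "\<sigma>0 \<in> space (prob_algebra SX)"
    and K: "(\<lambda>(x, y). K x y) \<in> measurable (SX \<Otimes>\<^sub>M SY) (prob_algebra SX)"
    and \<sigma>Y: "behavioral SX SY SY \<sigma>Y"
begin

lemma comp_meas: "t < T \<Longrightarrow> (\<lambda>h. h t) \<in> hist_space SX SY T \<rightarrow>\<^sub>M SX \<Otimes>\<^sub>M SY"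
  unfolding hist_space_def by (rule measurable_component_singleton) simp

lemma sigX_meas: "memory_one \<sigma>0 K t \<in> hist_space SX SY t \<rightarrow>\<^sub>M prob_algebra SX"
proof (cases t)
  case 0
  then have "memory_one \<sigma>0 K t = (\<lambda>_. \<sigma>0)" by (auto simp: memory_one_def)
  then show ?thesis using \<sigma>0 by simp
next
  case (Suc s)
  then have "memory_one \<sigma>0 K t = (\<lambda>h. (\<lambda>(x, y). K x y) (h s))"
    by (auto simp: memory_one_def fun_eq_iff split: prod.split)
  then show ?thesis
    using measurable_compose[OF comp_meas[of s t] K] Suc by simp
qed

lemma sigY_meas: "\<sigma>Y t \<in> hist_space SX SY t \<rightarrow>\<^sub>M prob_algebra SY"
  using \<sigma>Y by (simp add: behavioral_def)

lemma kern_meas: "(\<lambda>h. distr (memory_one \<sigma>0 K t h \<Otimes>\<^sub>M \<sigma>Y t h) (hist_space SX SY (Suc t)) (\<lambda>a. h(t := a)))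
   \<in> hist_space SX SY t \<rightarrow>\<^sub>M prob_algebra (hist_space SX SY (Suc t))"
proof (rule measurable_distr_prob_space2)
  show "(\<lambda>h. memory_one \<sigma>0 K t h \<Otimes>\<^sub>M \<sigma>Y t h) \<in> hist_space SX SY t \<rightarrow>\<^sub>M prob_algebra (SX \<Otimes>\<^sub>M SY)"
    by (rule measurable_pair_prob[OF sigX_meas sigY_meas])
  have "insert t {..<t} = {..<Suc t}" by auto
  then show "(\<lambda>(h, a). h(t := a)) \<in> hist_space SX SY t \<Otimes>\<^sub>M (SX \<Otimes>\<^sub>M SY) \<rightarrow>\<^sub>M hist_space SX SY (Suc t)"
    unfolding hist_space_def using measurable_add_dim[of t "{..<t}" "\<lambda>_. SX \<Otimes>\<^sub>M SY"] by simp
qed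

lemma H_space: "hist_dist SX SY (memory_one \<sigma>0 K) \<sigma>Y t \<in> space (prob_algebra (hist_space SX SY t))"
proof (induction t)
  case 0
  have "(\<lambda>_. undefined) \<in> space (hist_space SX SY 0)"
    by (simp add: hist_space_def space_PiM)
  then show ?case by (simp add: space_prob_algebra prob_space_return)
next
  case (Suc t)
  show ?case
    using prob_space_bind'[OF Suc kern_meas] sets_bind'[OF Suc kern_meas]
    by (simp add: space_prob_algebra)
qed


lemma act_space: "act_dist SX SY (memory_one \<sigma>0 K) \<sigma>Y t \<in> space (prob_algebra (SX \<Otimes>\<^sub>M SY))"
proof -
  let ?H = "hist_dist SX SY (memory_one \<sigma>0 K) \<sigma>Y (Suc t)"
  have H: "prob_space ?H" "sets ?H = sets (hist_space SX SY (Suc t))"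
    using H_space[of "Suc t"] by (simp_all add: space_prob_algebra del: hist_dist.simps)
  have m: "(\<lambda>h. h t) \<in> ?H \<rightarrow>\<^sub>M SX \<Otimes>\<^sub>M SY"
    using comp_meas[of t "Suc t"] H(2) by (simp cong: measurable_cong_sets del: hist_dist.simps)
  show ?thesis unfolding act_dist_def space_prob_algebra
    using prob_space.prob_space_distr[OF H(1) m] by simp
qed

lemma act_int:
  fixes f :: "'x \<times> 'y \<Rightarrow> real"
  assumes f: "f \<in> borel_measurable (SX \<Otimes>\<^sub>M SY)"
  shows "(\<integral>z. f z \<partial>act_dist SX SY (memory_one \<sigma>0 K) \<sigma>Y t) =
    (\<integral>h. f (h t) \<partial>hist_dist SX SY (memory_one \<sigma>0 K) \<sigma>Y (Suc t))"
proof -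
  have "sets (hist_dist SX SY (memory_one \<sigma>0 K) \<sigma>Y (Suc t)) = sets (hist_space SX SY (Suc t))"
    using H_space[of "Suc t"] by (simp add: space_prob_algebra del: hist_dist.simps)
  then have m: "(\<lambda>h. h t) \<in> hist_dist SX SY (memory_one \<sigma>0 K) \<sigma>Y (Suc t) \<rightarrow>\<^sub>M SX \<Otimes>\<^sub>M SY"
    using comp_meas[of t "Suc t"] by (simp cong: measurable_cong_sets del: hist_dist.simps)
  show ?thesis unfolding act_dist_def by (rule integral_distr[OF m f])
qed

lemma int_H_fst:
  fixes \<psi> :: "'x \<Rightarrow> real"
  assumes \<psi>: "\<psi> \<in> borel_measurable SX" and b: "\<And>x. x \<in> space SX \<Longrightarrow> \<bar>\<psi> x\<bar> \<le> B"
  shows "(\<integral>h. \<psi> (fst (h t)) \<partial>hist_dist SX SY (memory_one \<sigma>0 K) \<sigma>Y (Suc t)) =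
    (\<integral>h. (\<integral>s. \<psi> s \<partial>memory_one \<sigma>0 K t h) \<partial>hist_dist SX SY (memory_one \<sigma>0 K) \<sigma>Y t)"
proof -
  let ?H = "hist_dist SX SY (memory_one \<sigma>0 K) \<sigma>Y"
  let ?k = "\<lambda>h. distr (memory_one \<sigma>0 K t h \<Otimes>\<^sub>M \<sigma>Y t h) (hist_space SX SY (Suc t)) (\<lambda>a. h(t := a))"
  have Hs: "?H (Suc t) = ?H t \<bind> ?k" by simp
  have Ht: "prob_space (?H t)" "sets (?H t) = sets (hist_space SX SY t)"
    using H_space[of t] by (auto simp: space_prob_algebra)
  have spHt: "space (?H t) = space (hist_space SX SY t)" using Ht(2) by (rule sets_eq_imp_space_eq)
  have fm: "(\<lambda>h. \<psi> (fst (h t))) \<in> borel_measurable (hist_space SX SY (Suc t))"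
    using comp_meas[of t "Suc t"] \<psi> by measurable
  have fb: "\<bar>\<psi> (fst (h t))\<bar> \<le> B" if "h \<in> space (hist_space SX SY (Suc t))" for h
    using measurable_space[OF comp_meas[of t "Suc t"] that] b by (auto simp: space_pair_measure)
  have kM: "?k \<in> ?H t \<rightarrow>\<^sub>M subprob_algebra (hist_space SX SY (Suc t))"
    using measurable_prob_algebraD[OF kern_meas] Ht(2) by (simp cong: measurable_cong_sets)
  have kp: "prob_space (?k h)" if "h \<in> space (?H t)" for h
    using measurable_space[OF kern_meas, of h] that spHt by (auto simp: space_prob_algebra)
  have "(\<integral>h. \<psi> (fst (h t)) \<partial>?H (Suc t)) = (\<integral>h. (\<integral>g. \<psi> (fst (g t)) \<partial>?k h) \<partial>?H t)"
    unfolding Hs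
  proof (rule integral_bind[where B=B and B'=1])
    show "finite_measure (?H t)" using Ht(1) by (simp add: prob_space_def)
    show "AE x in ?H t. emeasure (?k x) (space (?k x)) \<le> ennreal 1"
    proof (rule AE_I2)
      fix x assume x: "x \<in> space (?H t)"
      show "emeasure (?k x) (space (?k x)) \<le> ennreal 1"
        using prob_space.emeasure_space_1[OF kp[OF x]] by (simp del: space_distr)
    qed
  qed (use fm fb kM in auto)
  also have "\<dots> = (\<integral>h. (\<integral>s. \<psi> s \<partial>memory_one \<sigma>0 K t h) \<partial>?H t)"
  proof (rule Bochner_Integration.integral_cong[OF refl])
    fix h assume h: "h \<in> space (?H t)"
    then have h': "h \<in> space (hist_space SX SY t)" using spHt by simp
    let ?A = "memory_one \<sigma>0 K t h" and ?B = "\<sigma>Y t h"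
    have A: "prob_space ?A" "sets ?A = sets SX"
      using measurable_space[OF sigX_meas h'] by (auto simp: space_prob_algebra)
    have B: "prob_space ?B" "sets ?B = sets SY"
      using measurable_space[OF sigY_meas h'] by (auto simp: space_prob_algebra)
    have sAB: "sets (?A \<Otimes>\<^sub>M ?B) = sets (SX \<Otimes>\<^sub>M SY)"
      using A(2) B(2) by (rule sets_pair_measure_cong)
    have upd: "(\<lambda>a. h(t := a)) \<in> ?A \<Otimes>\<^sub>M ?B \<rightarrow>\<^sub>M hist_space SX SY (Suc t)"
    proof -
      have "(\<lambda>a. h(t := a)) \<in> SX \<Otimes>\<^sub>M SY \<rightarrow>\<^sub>M PiM (insert t {..<t}) (\<lambda>_. SX \<Otimes>\<^sub>M SY)"
        using h' by (intro measurable_component_update) (auto simp: hist_space_def)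
      moreover have "insert t {..<t} = {..<Suc t}" by auto
      ultimately show ?thesis using sAB by (simp add: hist_space_def cong: measurable_cong_sets)
    qed
    have "(\<integral>g. \<psi> (fst (g t)) \<partial>?k h) = (\<integral>a. \<psi> (fst ((h(t := a)) t)) \<partial>(?A \<Otimes>\<^sub>M ?B))"
      by (rule integral_distr[OF upd fm])
    also have "\<dots> = (\<integral>a. \<psi> (fst a) \<partial>(?A \<Otimes>\<^sub>M ?B))" by simp
    also have "\<dots> = (\<integral>s. \<psi> s \<partial>distr (?A \<Otimes>\<^sub>M ?B) ?A fst)"
      by (rule integral_distr[symmetric]) (use \<psi> A(2) in \<open>auto cong: measurable_cong_sets\<close>)
    also have "distr (?A \<Otimes>\<^sub>M ?B) ?A fst = ?A"
      by (rule prob_space.distr_pair_fst[OF B(1)])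
    finally show "(\<integral>g. \<psi> (fst (g t)) \<partial>?k h) = (\<integral>s. \<psi> s \<partial>?A)" .
  qed
  finally show ?thesis .
qed

end

theorem theorem1:
  fixes SX :: "'x measure" and SY :: "'y measure"
    and uX uY :: "'x \<times> 'y \<Rightarrow> real" and d :: real
    and \<sigma>0 :: "'x measure" and K :: "'x \<Rightarrow> 'y \<Rightarrow> 'x measure"
    and \<alpha> \<beta> \<gamma> :: real and \<psi> :: "'x \<Rightarrow> real"
    and \<sigma>Y :: "nat \<Rightarrow> (nat \<Rightarrow> 'x \<times> 'y) \<Rightarrow> 'y measure"
  assumes d: "0 < d" "d < 1"
    and uX_meas: "uX \<in> borel_measurable (SX \<Otimes>\<^sub>M SY)"
    and uX_bdd: "\<exists>B. \<forall>z\<in>space (SX \<Otimes>\<^sub>M SY). \<bar>uX z\<bar> \<le> B"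
    and uY_meas: "uY \<in> borel_measurable (SX \<Otimes>\<^sub>M SY)"
    and uY_bdd: "\<exists>B. \<forall>z\<in>space (SX \<Otimes>\<^sub>M SY). \<bar>uY z\<bar> \<le> B"
    and \<sigma>0: "\<sigma>0 \<in> space (prob_algebra SX)"
    and K: "(\<lambda>(x, y). K x y) \<in> measurable (SX \<Otimes>\<^sub>M SY) (prob_algebra SX)"
    and \<psi>_meas: "\<psi> \<in> borel_measurable SX"
    and \<psi>_bdd: "\<exists>B. \<forall>x\<in>space SX. \<bar>\<psi> x\<bar> \<le> B"
    and eq: "\<forall>x\<in>space SX. \<forall>y\<in>space SY.
      \<alpha> * uX (x, y) + \<beta> * uY (x, y) + \<gamma> =
        \<psi> x - d * (\<integral>s. \<psi> s \<partial>K x y) - (1 - d) * (\<integral>s. \<psi> s \<partial>\<sigma>0)"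
    and \<sigma>Y: "behavioral SX SY SY \<sigma>Y"
  shows "\<alpha> * payoff SX SY (memory_one \<sigma>0 K) \<sigma>Y d uX
       + \<beta> * payoff SX SY (memory_one \<sigma>0 K) \<sigma>Y d uY + \<gamma> = 0"
proof -
  obtain BX where BX: "\<forall>z\<in>space (SX \<Otimes>\<^sub>M SY). \<bar>uX z\<bar> \<le> BX" using uX_bdd by blast
  obtain BY where BY: "\<forall>z\<in>space (SX \<Otimes>\<^sub>M SY). \<bar>uY z\<bar> \<le> BY" using uY_bdd by blast
  obtain Bp where Bp: "\<forall>x\<in>space SX. \<bar>\<psi> x\<bar> \<le> Bp" using \<psi>_bdd by blast
  define H where "H = hist_dist SX SY (memory_one \<sigma>0 K) \<sigma>Y"
  define M where "M = act_dist SX SY (memory_one \<sigma>0 K) \<sigma>Y"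
  define g where "g = (\<lambda>z. \<integral>s. \<psi> s \<partial>K (fst z) (snd z))"
  define c where "c = (\<integral>s. \<psi> s \<partial>\<sigma>0)"
  define a where "a = (\<lambda>t. \<integral>z. \<psi> (fst z) \<partial>M t)"
  define ux where "ux = (\<lambda>t. \<integral>z. uX z \<partial>M t)"
  define uy where "uy = (\<lambda>t. \<integral>z. uY z \<partial>M t)"
  have Kz: "K (fst z) (snd z) \<in> space (prob_algebra SX)" if "z \<in> space (SX \<Otimes>\<^sub>M SY)" for z
    using measurable_space[OF K that] by (simp add: case_prod_beta)
  have g_meas: "g \<in> borel_measurable (SX \<Otimes>\<^sub>M SY)"
  proof -
    have "(\<lambda>z. (\<lambda>N. integral\<^sup>L N \<psi>) ((\<lambda>(x, y). K x y) z)) \<in> borel_measurable (SX \<Otimes>\<^sub>M SY)"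
      by (rule measurable_compose[OF measurable_prob_algebraD[OF K] integral_measurable_subprob_algebra[OF \<psi>_meas]])
    then show ?thesis by (simp add: g_def case_prod_beta)
  qed
  have g_bd: "\<bar>g z\<bar> \<le> Bp" if "z \<in> space (SX \<Otimes>\<^sub>M SY)" for z
    unfolding g_def by (rule int_bound(1)[OF Kz[OF that] \<psi>_meas]) (use Bp in auto)
  have pf_meas: "(\<lambda>z. \<psi> (fst z)) \<in> borel_measurable (SX \<Otimes>\<^sub>M SY)" using \<psi>_meas by measurable
  have pf_bd: "\<bar>\<psi> (fst z)\<bar> \<le> Bp" if "z \<in> space (SX \<Otimes>\<^sub>M SY)" for z
    using that Bp by (auto simp: space_pair_measure)
  have Ms: "M t \<in> space (prob_algebra (SX \<Otimes>\<^sub>M SY))" for t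
    unfolding M_def by (rule act_space[OF \<sigma>0 K \<sigma>Y])
  have a0: "a 0 = c"
  proof -
    have "a 0 = (\<integral>h. \<psi> (fst (h 0)) \<partial>H (Suc 0))"
      unfolding a_def M_def H_def by (rule act_int[OF \<sigma>0 K \<sigma>Y pf_meas])
    also have "\<dots> = (\<integral>h. (\<integral>s. \<psi> s \<partial>memory_one \<sigma>0 K 0 h) \<partial>H 0)"
      unfolding H_def by (rule int_H_fst[OF \<sigma>0 K \<sigma>Y \<psi>_meas]) (use Bp in auto)
    also have "\<dots> = (\<integral>h. c \<partial>H 0)" by (simp add: memory_one_def c_def)
    also have "\<dots> = c"
    proof -
      have "prob_space (H 0)" using H_space[OF \<sigma>0 K \<sigma>Y, of 0] by (simp add: H_def space_prob_algebra del: hist_dist.simps)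
      then show ?thesis by (simp add: prob_space.prob_space)
    qed
    finally show ?thesis .
  qed
  have aS: "a (Suc t) = (\<integral>z. g z \<partial>M t)" for t
  proof -
    have "a (Suc t) = (\<integral>h. \<psi> (fst (h (Suc t))) \<partial>H (Suc (Suc t)))"
      unfolding a_def M_def H_def by (rule act_int[OF \<sigma>0 K \<sigma>Y pf_meas])
    also have "\<dots> = (\<integral>h. (\<integral>s. \<psi> s \<partial>memory_one \<sigma>0 K (Suc t) h) \<partial>H (Suc t))"
      unfolding H_def by (rule int_H_fst[OF \<sigma>0 K \<sigma>Y \<psi>_meas]) (use Bp in auto)
    also have "\<dots> = (\<integral>h. g (h t) \<partial>H (Suc t))" by (simp add: memory_one_def g_def del: hist_dist.simps)
    also have "\<dots> = (\<integral>z. g z \<partial>M t)"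
      unfolding M_def H_def by (rule act_int[OF \<sigma>0 K \<sigma>Y g_meas, symmetric])
    finally show ?thesis .
  qed
  have e: "\<alpha> * ux t + \<beta> * uy t + \<gamma> = a t - d * a (Suc t) - (1 - d) * a 0" for t
  proof -
    have P: "prob_space (M t)" and se: "sets (M t) = sets (SX \<Otimes>\<^sub>M SY)"
      using Ms[of t] by (auto simp: space_prob_algebra)
    have sp: "space (M t) = space (SX \<Otimes>\<^sub>M SY)" using se by (rule sets_eq_imp_space_eq)
    interpret prob_space "M t" by (rule P)
    have iX: "integrable (M t) uX" by (rule int_bound(2)[OF Ms uX_meas]) (use BX in auto)
    have iY: "integrable (M t) uY" by (rule int_bound(2)[OF Ms uY_meas]) (use BY in auto)
    have ip: "integrable (M t) (\<lambda>z. \<psi> (fst z))" by (rule int_bound(2)[OF Ms pf_meas]) (use pf_bd in auto)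
    have ig: "integrable (M t) g" by (rule int_bound(2)[OF Ms g_meas]) (use g_bd in auto)
    have "\<alpha> * ux t + \<beta> * uy t + \<gamma> = (\<integral>z. \<alpha> * uX z + \<beta> * uY z + \<gamma> \<partial>M t)"
      using iX iY by (simp add: ux_def uy_def prob_space)
    also have "\<dots> = (\<integral>z. \<psi> (fst z) - d * g z - (1 - d) * c \<partial>M t)"
    proof (rule Bochner_Integration.integral_cong[OF refl])
      fix z assume "z \<in> space (M t)"
      then obtain x y where z: "z = (x, y)" "x \<in> space SX" "y \<in> space SY"
        using sp by (auto simp: space_pair_measure)
      show "\<alpha> * uX z + \<beta> * uY z + \<gamma> = \<psi> (fst z) - d * g z - (1 - d) * c"
        using eq z by (simp add: g_def c_def)
    qed
    also have "\<dots> = a t - d * (\<integral>z. g z \<partial>M t) - (1 - d) * c"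
      using ip ig by (simp add: a_def prob_space)
    finally show ?thesis by (simp add: aS a0)
  qed
  have bx: "\<bar>ux t\<bar> \<le> BX" for t
    unfolding ux_def by (rule int_bound(1)[OF Ms uX_meas]) (use BX in auto)
  have bY: "\<bar>uy t\<bar> \<le> BY" for t
    unfolding uy_def by (rule int_bound(1)[OF Ms uY_meas]) (use BY in auto)
  have ba: "\<bar>a t\<bar> \<le> Bp" for t
    unfolding a_def by (rule int_bound(1)[OF Ms pf_meas]) (use pf_bd in auto)
  have "\<alpha> * ((1 - d) * (\<Sum>t. d ^ t * ux t)) + \<beta> * ((1 - d) * (\<Sum>t. d ^ t * uy t)) + \<gamma> = 0"
    by (rule series_lemma[OF d bx bY ba e])
  then show ?thesis by (simp add: payoff_def ux_def uy_def M_def)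
qed

end
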